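(* Let $f$ be either the standard normal density, the standard logistic density, the standard Laplace density, or a generalised hyperbolic density with fixed shape parameter. Consider the linear regression model $y_j={\bf x}_j^\top\bm\beta+\varepsilon_j$, $j=1,\dots,n$, with $\bm\beta\in\mathbb{R}^p$, ${\bf X}=({\bf x}_1^\top,\dots,{\bf x}_n^\top)^\top$ a known $n\times p$ design matrix of full column rank, and $\varepsilon_j\stackrel{i.i.d.}{\sim}\mathrm{TP}(0,\sigma,\gamma;f)$, with prior $\pi(\bm\beta,\sigma,\gamma)\propto\pi(\gamma)/\sigma^{q}$, where $q\ge0$ and $\pi(\gamma)$ is a proper prior on $\Gamma$. Suppose that ${\bf y}=(y_1,\dots,y_n)^\top\notin\mathcal{C}({\bf X})$ (the column space of ${\bf X}$), that $n>p+1-q$, and that $\int_{\Gamma}\frac{\max\{a(\gamma),b(\gamma)\}^{n+q-1}}{[a(\gamma)+b(\gamma)]^n}\pi(\gamma)\,d\gamma<\infty$. Then the posterior distribution of $(\bm\beta,\sigma,\gamma)$ is proper.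
   Context: The two-piece distribution $\mathrm{TP}(\mu,\sigma,\gamma;f)$ for a symmetric density $f$ with mode $0$ has density $g(z)=\frac{2}{\sigma[a(\gamma)+b(\gamma)]}\left[f\!\left(\frac{z-\mu}{\sigma b(\gamma)}\right)I(z<\mu)+f\!\left(\frac{z-\mu}{\sigma a(\gamma)}\right)I(z\ge\mu)\right]$, $z\in\mathbb{R}$, with $\mu\in\mathbb{R}$, $\sigma>0$, $\gamma\in\Gamma\subset\mathbb{R}$, and $a(\cdot),b(\cdot)$ given positive functions on $\Gamma$. The likelihood is $\prod_j g(y_j-{\bf x}_j^\top\bm\beta)$ with $\mu=0$; the posterior is proper if likelihood times prior has finite integral. *)

theory Defs
  imports "HOL-Probability.Probability"
begin

definition logistic_density :: "real \<Rightarrow> real" where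
  "logistic_density x = exp (- x) / (1 + exp (- x))^2"

definition laplace_density :: "real \<Rightarrow> real" where
  "laplace_density x = exp (- \<bar>x\<bar>) / 2"

text \<open>Modified Bessel function of the third kind, via its standard integral representation
  K_nu(z) = int_0^infty exp(-z cosh t) cosh(nu t) dt  (z > 0).\<close>
definition besselK :: "real \<Rightarrow> real \<Rightarrow> real" where
  "besselK \<nu> z = (LINT t:{0<..}|lborel. exp (- z * cosh t) * cosh (\<nu> * t))"

text \<open>Symmetric (beta = 0), location-zero generalised hyperbolic density with
  shape lambda, tail parameter alpha > 0 and scale delta > 0.\<close>
definition gh_density :: "real \<Rightarrow> real \<Rightarrow> real \<Rightarrow> real \<Rightarrow> real" where
  "gh_density lam \<alpha> \<delta> x =
     (\<alpha> / \<delta>) powr lam / (sqrt (2 * pi) * besselK lam (\<delta> * \<alpha>))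
     * besselK (lam - 1/2) (\<alpha> * sqrt (\<delta>^2 + x^2))
     / (sqrt (\<delta>^2 + x^2) / \<alpha>) powr (1/2 - lam)"

definition admissible_base_density :: "(real \<Rightarrow> real) \<Rightarrow> bool" where
  "admissible_base_density f \<longleftrightarrow>
     f = std_normal_density \<or> f = logistic_density \<or> f = laplace_density \<or>
     (\<exists>lam \<alpha> \<delta>. \<alpha> > 0 \<and> \<delta> > 0 \<and> f = gh_density lam \<alpha> \<delta>)"

definition tp_density ::
  "(real \<Rightarrow> real) \<Rightarrow> (real \<Rightarrow> real) \<Rightarrow> (real \<Rightarrow> real) \<Rightarrow> real \<Rightarrow> real \<Rightarrow> real \<Rightarrow> real \<Rightarrow> real" where
  "tp_density f a b \<mu> \<sigma> \<gamma> z =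
     2 / (\<sigma> * (a \<gamma> + b \<gamma>)) *
     (if z < \<mu> then f ((z - \<mu>) / (\<sigma> * b \<gamma>)) else f ((z - \<mu>) / (\<sigma> * a \<gamma>)))"

definition tp_likelihood ::
  "(real \<Rightarrow> real) \<Rightarrow> (real \<Rightarrow> real) \<Rightarrow> (real \<Rightarrow> real) \<Rightarrow> real^'p^'n::finite \<Rightarrow> real^'n
    \<Rightarrow> real^'p \<Rightarrow> real \<Rightarrow> real \<Rightarrow> real" where
  "tp_likelihood f a b X y \<beta> \<sigma> \<gamma> =
     (\<Prod>j\<in>UNIV. tp_density f a b 0 \<sigma> \<gamma> (y $ j - (X *v \<beta>) $ j))"

definition posterior_proper ::
  "(real \<Rightarrow> real) \<Rightarrow> (real \<Rightarrow> real) \<Rightarrow> (real \<Rightarrow> real) \<Rightarrow> real set \<Rightarrow> (real \<Rightarrow> real) \<Rightarrow> real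
    \<Rightarrow> real^'p^'n::finite \<Rightarrow> real^'n \<Rightarrow> bool" where
  "posterior_proper f a b \<Gamma> \<pi> q X y \<longleftrightarrow>
     (\<integral>\<^sup>+ (\<beta>, \<sigma>, \<gamma>). indicator (UNIV \<times> {0<..} \<times> \<Gamma>) (\<beta>, \<sigma>, \<gamma>) *
          ennreal (tp_likelihood f a b X y \<beta> \<sigma> \<gamma> * \<pi> \<gamma> / \<sigma> powr q)
        \<partial>(lborel \<Otimes>\<^sub>M lborel \<Otimes>\<^sub>M lborel)) < \<infinity>"

end

theory Submission
  imports Defs
begin

lemma avg_le: "A \<le> (a+b)/2 \<Longrightarrow> a \<le> T \<Longrightarrow> b \<le> T \<Longrightarrow> A \<le> (T::real)" by (simp add: field_simps)

lemma lin_bound: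
  fixes X :: "real^'p::finite^'n::finite" and y :: "real^'n"
  assumes "rank X = CARD('p)" "y \<notin> range (\<lambda>\<beta>. X *v \<beta>)"
  shows "\<exists>\<kappa>>0. \<forall>\<beta>. norm (y - X *v \<beta>) \<ge> \<kappa> * (1 + norm \<beta>)"
proof -
  have inj: "inj ((*v) X)" using assms(1) full_rank_injective by blast
  have bl: "bounded_linear ((*v) X)" by (simp add: bounded_linearI' matrix_vector_right_distrib matrix_vector_mult_scaleR)
  obtain e where e: "e > 0" "\<And>x. norm (X *v x) \<ge> e * norm x"
    using injective_imp_isometric[of UNIV "(*v) X"] bl inj
    by (metis closed_UNIV subspace_UNIV UNIV_I inj_eq matrix_vector_mult_0_right)
  define S where "S = range (\<lambda>\<beta>. X *v \<beta>)"
  have "subspace S" unfolding S_def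
    by (metis bl linear_subspace_image subspace_UNIV bounded_linear.linear image_def)
  hence "closed S" by (rule closed_subspace)
  have "S \<noteq> {}" unfolding S_def by auto
  define d where "d = infdist y S"
  have d: "d > 0" unfolding d_def using infdist_pos_not_in_closed[OF \<open>closed S\<close> \<open>S \<noteq> {}\<close>] assms(2) S_def by blast
  have dle: "d \<le> norm (y - X *v \<beta>)" for \<beta>
    unfolding d_def using infdist_le[of "X *v \<beta>" S y] by (simp add: S_def dist_norm)
  have tri: "norm (y - X *v \<beta>) \<ge> e * norm \<beta> - norm y" for \<beta>
    using e(2)[of \<beta>] norm_triangle_ineq2[of "X *v \<beta>" y] norm_minus_commute[of y "X *v \<beta>"] by linarith
  define \<kappa> where "\<kappa> = min (d / 2) (e * d / (2 * (norm y + d)))"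
  have "\<kappa> > 0" using d e norm_ge_zero[of y] unfolding \<kappa>_def by (auto intro!: divide_pos_pos add_nonneg_pos)
  moreover have "\<kappa> * (1 + norm \<beta>) \<le> norm (y - X *v \<beta>)" for \<beta>
  proof (cases "norm \<beta> \<le> (norm y + d) / e")
    case True
    have k1: "\<kappa> \<le> d/2" "\<kappa> \<le> e * d / (2 * (norm y + d))" unfolding \<kappa>_def using min.cobounded1 min.cobounded2 by blast+
    have "\<kappa> * (1 + norm \<beta>) = \<kappa> + \<kappa> * norm \<beta>" by (simp add: distrib_left)
    also have "\<dots> \<le> d/2 + (e * d / (2 * (norm y + d))) * norm \<beta>"
      using k1 by (intro add_mono mult_right_mono) auto
    also have "(e * d / (2 * (norm y + d))) * norm \<beta> \<le> (e * d / (2 * (norm y + d))) * ((norm y + d) / e)"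
      using True d e by (intro mult_left_mono) auto
    also have "\<dots> = d / 2"
    proof -
      have "norm y + d > 0" using d norm_ge_zero[of y] by linarith
      have gen: "\<And>e N d. e > 0 \<Longrightarrow> N > 0 \<Longrightarrow> e * d / (2 * N) * (N / e) = d / (2::real)"
        by (simp add: field_simps)
      show ?thesis using gen[OF e(1) \<open>norm y + d > 0\<close>] .
    qed
    finally show ?thesis using dle[of \<beta>] by linarith
  next
    case False
    hence nb: "e * norm \<beta> \<ge> norm y + d" using e by (simp add: field_simps)
    have k0: "\<kappa> \<le> d/2" "\<kappa> \<le> e * d / (2 * (norm y + d))" unfolding \<kappa>_def using min.cobounded1 min.cobounded2 by blast+
    have "\<kappa> * (1 + norm \<beta>) = \<kappa> + \<kappa> * norm \<beta>" by (simp add: distrib_left)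
    also have "\<dots> \<le> d/2 + (e * d / (2 * (norm y + d))) * norm \<beta>"
      using k0 by (intro add_mono mult_right_mono) auto
    finally have k1: "\<kappa> * (1 + norm \<beta>) \<le> d/2 + (e * d / (2 * (norm y + d))) * norm \<beta>" .
    have N: "norm y + d > 0" using d norm_ge_zero[of y] by linarith
    have "e * d * norm \<beta> \<le> (norm y + d) * (e * norm \<beta> - norm y)"
    proof -
      have "(norm y + d) * norm y \<le> (e * norm \<beta>) * norm y"
        using nb by (intro mult_right_mono) auto
      thus ?thesis by (simp add: algebra_simps)
    qed
    hence "e * d / (2 * (norm y + d)) * norm \<beta> \<le> (e * norm \<beta> - norm y) / 2"
      using N by (simp add: field_simps)
    hence "\<kappa> * (1 + norm \<beta>) \<le> (d + (e * norm \<beta> - norm y)) / 2"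
      using k1 by (simp add: field_simps)
    thus ?thesis using tri[of \<beta>] dle[of \<beta>] avg_le by blast
  qed
  ultimately show ?thesis by blast
qed

lemma powr_le_exp:
  fixes \<mu> \<epsilon> x :: real
  assumes "\<mu> > 0" "\<epsilon> > 0" "x > 0"
  shows "x powr \<mu> \<le> exp (\<mu> * (ln (\<mu> / \<epsilon>) - 1)) * exp (\<epsilon> * x)"
proof -
  have "ln (\<epsilon> * x / \<mu>) \<le> \<epsilon> * x / \<mu> - 1" using assms by (intro ln_le_minus_one) auto
  moreover have "ln (\<epsilon> * x / \<mu>) = ln x - ln (\<mu> / \<epsilon>)" using assms by (simp add: ln_div ln_mult)
  ultimately have "ln x \<le> \<epsilon> * x / \<mu> - 1 + ln (\<mu> / \<epsilon>)" by linarith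
  hence "\<mu> * ln x \<le> \<mu> * (\<epsilon> * x / \<mu> - 1 + ln (\<mu> / \<epsilon>))" using assms by (intro mult_left_mono) auto
  also have "\<dots> = \<mu> * (ln (\<mu> / \<epsilon>) - 1) + \<epsilon> * x" using assms by (simp add: field_simps)
  finally have "exp (\<mu> * ln x) \<le> exp (\<mu> * (ln (\<mu> / \<epsilon>) - 1) + \<epsilon> * x)" by simp
  thus ?thesis using assms by (simp add: powr_def exp_add mult.commute)
qed

lemma normal_bound: "\<bar>std_normal_density x\<bar> \<le> exp (1/2) / sqrt (2*pi) * exp (- 1 * \<bar>x\<bar>)"
proof -
  have "- x\<^sup>2 / 2 \<le> 1/2 + (- \<bar>x\<bar>)"
  proof -
    have "(\<bar>x\<bar> - 1)^2 \<ge> 0" by simp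
    thus ?thesis by (simp add: power2_eq_square algebra_simps abs_mult_self_eq)
  qed
  hence "exp (- x\<^sup>2 / 2) \<le> exp (1/2) * exp (- \<bar>x\<bar>)" by (simp flip: exp_add)
  thus ?thesis by (simp add: std_normal_density_def divide_right_mono)
qed

lemma logistic_bound: "\<bar>logistic_density x\<bar> \<le> 1 * exp (- 1 * \<bar>x\<bar>)"
proof (cases "x \<ge> 0")
  case True
  have "(1 + exp (-x))^2 \<ge> 1" by (simp add: one_le_power)
  moreover have p: "1 + exp (-x) > 0" by (simp add: add_pos_pos)
  ultimately have "exp (-x) / (1 + exp (- x))^2 \<le> exp (-x) / 1"
    by (intro divide_left_mono) auto
  thus ?thesis using True p by (simp add: logistic_density_def)
next
  case False
  have "(1 + exp (-x))^2 \<ge> exp (-x)^2" by (intro power_mono) auto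
  moreover have "1 + exp (-x) > 0" by (simp add: add_pos_pos)
  hence "(1 + exp (-x))^2 * exp (-x)^2 > 0" by simp
  ultimately have "exp (-x) / (1 + exp (- x))^2 \<le> exp (-x) / exp (-x)^2"
    by (intro divide_left_mono) auto
  also have "\<dots> = exp x" by (simp add: power2_eq_square exp_minus field_simps)
  finally show ?thesis using False by (simp add: logistic_density_def)
qed

lemma laplace_bound: "\<bar>laplace_density x\<bar> \<le> 1/2 * exp (- 1 * \<bar>x\<bar>)"
  by (simp add: laplace_density_def)

lemma cosh_lower: "t \<ge> 0 \<Longrightarrow> cosh (t::real) \<ge> 1/2 + exp t / 4"
proof -
  assume "t \<ge> 0"
  have "cosh t \<ge> exp t / 2" by (simp add: cosh_field_def)
  thus ?thesis using cosh_real_ge_1[of t] by linarith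
qed

lemma cosh_upper: "cosh (y::real) \<le> exp \<bar>y\<bar>"
proof (cases "y \<ge> 0")
  case True
  have "exp (-y) \<le> exp y" using True by simp
  thus ?thesis using True by (simp add: cosh_field_def)
next
  case False
  have "exp y \<le> exp (-y)" using False by simp
  thus ?thesis using False by (simp add: cosh_field_def)
qed

lemma besselK_bound:
  fixes z0 :: real assumes z0: "z0 > 0"
  shows "\<exists>B\<ge>0. \<forall>z\<ge>z0. \<bar>besselK \<nu> z\<bar> \<le> B * exp (- z / 2)"
proof -
  define \<mu> where "\<mu> = \<bar>\<nu>\<bar> + 1"
  define \<epsilon> where "\<epsilon> = z0 / 4"
  define E where "E = exp (\<mu> * (ln (\<mu> / \<epsilon>) - 1))"
  have \<mu>: "\<mu> > 0" and \<epsilon>: "\<epsilon> > 0" and E: "E > 0" using z0 by (auto simp: \<mu>_def \<epsilon>_def E_def)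
  have pw: "\<bar>exp (- z * cosh t) * cosh (\<nu> * t)\<bar> \<le> exp (- z / 2) * E * exp (- 1 * t)" if "z \<ge> z0" "t > 0" for z t
  proof -
    have "z * cosh t \<ge> z * (1/2 + exp t / 4)" using that z0 cosh_lower[of t] by (intro mult_left_mono) auto
    moreover have "z * (exp t / 4) \<ge> z0 * (exp t / 4)" using that by (intro mult_right_mono) auto
    moreover have "z * (1/2 + exp t / 4) = z/2 + z * (exp t / 4)" "\<epsilon> * exp t = z0 * (exp t / 4)"
      unfolding \<epsilon>_def by (simp_all add: algebra_simps)
    ultimately have "z * cosh t \<ge> z / 2 + \<epsilon> * exp t" by linarith
    hence e1: "exp (- z * cosh t) \<le> exp (- z / 2) * exp (- (\<epsilon> * exp t))" by (simp flip: exp_add)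
    have "exp (\<mu> * t) = exp t powr \<mu>" by (simp add: powr_def)
    also have "\<dots> \<le> E * exp (\<epsilon> * exp t)" unfolding E_def using powr_le_exp[OF \<mu> \<epsilon>, of "exp t"] by simp
    finally have "exp (\<mu> * t) \<le> E * exp (\<epsilon> * exp t)" .
    hence e2: "exp (- (\<epsilon> * exp t)) \<le> E * exp (- (\<mu> * t))"
      by (simp add: exp_minus field_simps)
    have e3: "cosh (\<nu> * t) \<le> exp (\<bar>\<nu>\<bar> * t)" using cosh_upper[of "\<nu> * t"] that by (simp add: abs_mult)
    have "\<bar>exp (- z * cosh t) * cosh (\<nu> * t)\<bar> = exp (- z * cosh t) * cosh (\<nu> * t)" by simp
    also have "\<dots> \<le> (exp (- z / 2) * (E * exp (- (\<mu> * t)))) * exp (\<bar>\<nu>\<bar> * t)"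
      using e1 e2 e3 E by (intro mult_mono order.trans[OF e1] mult_left_mono) auto
    also have "\<dots> = exp (- z / 2) * E * (exp (- (\<mu> * t)) * exp (\<bar>\<nu>\<bar> * t))" by simp
    also have "exp (- (\<mu> * t)) * exp (\<bar>\<nu>\<bar> * t) = exp (- 1 * t)"
      by (simp add: \<mu>_def algebra_simps flip: exp_add)
    finally show ?thesis .
  qed
  have "\<bar>besselK \<nu> z\<bar> \<le> E * exp (- z / 2)" if z: "z \<ge> z0" for z
  proof -
    define g where "g = (\<lambda>t. indicator {0<..} t *\<^sub>R (exp (- z * cosh t) * cosh (\<nu> * t)))"
    have bK: "besselK \<nu> z = integral\<^sup>L lborel g" by (simp add: besselK_def set_lebesgue_integral_def g_def)
    have hi: "((\<lambda>t. exp (- z / 2) * E * exp (- 1 * t)) has_integral exp (- z / 2) * E * (exp (- 1 * 0) / 1)) {0..}"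
      by (intro has_integral_mult_right has_integral_exp_minus_to_infinity) auto
    have nn: "(\<integral>\<^sup>+ t. ennreal (indicator {0..} t * (exp (- z / 2) * E * exp (- 1 * t))) \<partial>lborel) = ennreal (exp (- z / 2) * E)"
      using nn_integral_has_integral_lebesgue[OF _ hi] E by simp
    have "ennreal \<bar>integral\<^sup>L lborel g\<bar> \<le> ennreal (exp (- z / 2) * E)"
    proof (cases "integrable lborel g")
      case True
      have "ennreal (norm (integral\<^sup>L lborel g)) \<le> (\<integral>\<^sup>+ t. norm (g t) \<partial>lborel)"
        by (rule integral_norm_bound_ennreal[OF True])
      also have "\<dots> \<le> (\<integral>\<^sup>+ t. ennreal (indicator {0..} t * (exp (- z / 2) * E * exp (- 1 * t))) \<partial>lborel)"
      proof (intro nn_integral_mono)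
        fix t show "ennreal (norm (g t)) \<le> ennreal (indicator {0..} t * (exp (- z / 2) * E * exp (- 1 * t)))"
          using pw[OF z, of t] unfolding g_def by (auto simp: indicator_def intro!: ennreal_leI)
      qed
      finally show ?thesis using nn by simp
    next
      case False thus ?thesis by (simp add: not_integrable_integral_eq)
    qed
    hence "\<bar>integral\<^sup>L lborel g\<bar> \<le> exp (- z / 2) * E" using E by (subst (asm) ennreal_le_iff) auto
    thus ?thesis using bK by (simp add: mult.commute)
  qed
  thus ?thesis using E by (intro exI[of _ E]) auto
qed

lemma gh_bound:
  assumes \<alpha>: "\<alpha> > 0" and \<delta>: "\<delta> > 0"
  shows "\<exists>C>0. \<exists>c>0. \<forall>x. \<bar>gh_density lam \<alpha> \<delta> x\<bar> \<le> C * exp (- c * \<bar>x\<bar>)"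
proof -
  define \<nu> where "\<nu> = lam - 1/2"
  define K0 where "K0 = (\<alpha> / \<delta>) powr lam / (sqrt (2 * pi) * besselK lam (\<delta> * \<alpha>))"
  obtain B where B: "B \<ge> 0" "\<And>z. z \<ge> \<alpha> * \<delta> \<Longrightarrow> \<bar>besselK \<nu> z\<bar> \<le> B * exp (- z / 2)"
    using besselK_bound[of "\<alpha> * \<delta>" \<nu>] \<alpha> \<delta> by auto
  define D where "D = exp (\<nu> * (ln (\<nu> / (\<alpha>^2/4)) - 1)) + (\<delta> / \<alpha>) powr \<nu>"
  have D0: "D \<ge> 0" unfolding D_def by (intro add_nonneg_nonneg) auto
  have pw: "(u / \<alpha>) powr \<nu> \<le> D * exp (\<alpha> * u / 4)" if u: "u \<ge> \<delta>" for u
  proof (cases "\<nu> > 0")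
    case True
    have "(u / \<alpha>) powr \<nu> \<le> exp (\<nu> * (ln (\<nu> / (\<alpha>^2/4)) - 1)) * exp (\<alpha>^2/4 * (u / \<alpha>))"
      using u \<delta> \<alpha> by (intro powr_le_exp True) auto
    also have "\<alpha>^2/4 * (u / \<alpha>) = \<alpha> * u / 4" using \<alpha> by (simp add: power2_eq_square)
    also have "exp (\<nu> * (ln (\<nu> / (\<alpha>^2/4)) - 1)) \<le> D" unfolding D_def by simp
    finally show ?thesis by (simp add: mult_right_mono)
  next
    case False
    have "(u / \<alpha>) powr \<nu> \<le> (\<delta> / \<alpha>) powr \<nu>"
      using False u \<alpha> \<delta> by (intro powr_mono2') (auto simp: divide_right_mono)
    also have "\<dots> \<le> D" unfolding D_def by simp
    also have "D \<le> D * exp (\<alpha> * u / 4)" using D0 u \<alpha> \<delta> by (intro mult_le_cancel_left1[THEN iffD2]) auto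
    finally show ?thesis .
  qed
  define C where "C = \<bar>K0\<bar> * B * D + 1"
  have C: "C > 0" unfolding C_def using B D0 by (simp add: add_nonneg_pos)
  have "\<bar>gh_density lam \<alpha> \<delta> x\<bar> \<le> C * exp (- (\<alpha>/4) * \<bar>x\<bar>)" for x
  proof -
    define u where "u = sqrt (\<delta>^2 + x^2)"
    have u\<delta>: "u \<ge> \<delta>" unfolding u_def using \<delta> by (intro real_le_rsqrt) auto
    have ux: "u \<ge> \<bar>x\<bar>" unfolding u_def by (intro real_le_rsqrt) auto
    have upos: "u > 0" using u\<delta> \<delta> by linarith
    have inv: "(u / \<alpha>) powr \<nu> = inverse ((u / \<alpha>) powr (1/2 - lam))"
      unfolding \<nu>_def by (subst powr_minus[symmetric]) simp
    have eq: "gh_density lam \<alpha> \<delta> x = K0 * besselK \<nu> (\<alpha> * u) * (u / \<alpha>) powr \<nu>"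
      unfolding gh_density_def K0_def u_def[symmetric] inv unfolding \<nu>_def
      by (simp only: divide_inverse mult.assoc)
    have "\<bar>gh_density lam \<alpha> \<delta> x\<bar> = \<bar>K0\<bar> * \<bar>besselK \<nu> (\<alpha> * u)\<bar> * (u / \<alpha>) powr \<nu>"
      unfolding eq by (simp add: abs_mult)
    also have "\<dots> \<le> \<bar>K0\<bar> * (B * exp (- (\<alpha> * u) / 2)) * (D * exp (\<alpha> * u / 4))"
      using B(2)[of "\<alpha> * u"] pw[OF u\<delta>] u\<delta> \<alpha> B(1) D0
      by (intro mult_mono mult_left_mono) auto
    also have "\<dots> = (\<bar>K0\<bar> * B * D) * exp (- (\<alpha> / 4) * u)"
      by (simp add: algebra_simps flip: exp_add)
    also have "\<dots> \<le> C * exp (- (\<alpha> / 4) * \<bar>x\<bar>)"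
      unfolding C_def using ux \<alpha> B(1) D0
      by (intro mult_mono) auto
    finally show ?thesis .
  qed
  thus ?thesis using C \<alpha> by (intro exI[of _ C] conjI exI[of _ "\<alpha>/4"]) auto
qed

lemma admissible_bound:
  assumes "admissible_base_density f"
  shows "\<exists>C>0. \<exists>c>0. \<forall>x. \<bar>f x\<bar> \<le> C * exp (- c * \<bar>x\<bar>)"
  using assms unfolding admissible_base_density_def
proof (elim disjE exE conjE)
  assume "f = std_normal_density"
  thus ?thesis using normal_bound by (intro exI[of _ "exp (1/2) / sqrt (2*pi)"] conjI exI[of _ 1]) auto
next
  assume "f = logistic_density"
  thus ?thesis using logistic_bound by (intro exI[of _ 1] conjI exI[of _ 1]) auto
next
  assume "f = laplace_density"
  thus ?thesis using laplace_bound by (intro exI[of _ "1/2"] conjI exI[of _ 1]) auto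
next
  fix lam \<alpha> \<delta> :: real assume "\<alpha> > 0" "\<delta> > 0" "f = gh_density lam \<alpha> \<delta>"
  thus ?thesis using gh_bound by blast
qed

lemma exp_abs_integral:
  fixes v :: real assumes v: "v > 0"
  shows "(\<integral>\<^sup>+ t. ennreal (exp (- v * \<bar>t\<bar>)) \<partial>lborel) \<le> ennreal (2 / v)"
proof -
  have hi: "((\<lambda>t. exp (- v * t)) has_integral exp (- v * 0) / v) {0..}"
    by (rule has_integral_exp_minus_to_infinity[OF v])
  have I1: "(\<integral>\<^sup>+ t. ennreal (indicator {0..} t * exp (- v * t)) \<partial>lborel) = ennreal (1 / v)"
    using nn_integral_has_integral_lebesgue[OF _ hi] by simp
  have I2: "(\<integral>\<^sup>+ t. ennreal (indicator {0..} (- t) * exp (- v * (- t))) \<partial>lborel) = ennreal (1 / v)"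
  proof -
    have "(\<integral>\<^sup>+ t. ennreal (indicator {0..} (- t) * exp (- v * (- t))) \<partial>lborel)
        = (\<integral>\<^sup>+ t. ennreal (indicator {0..} t * exp (- v * t)) \<partial>distr lborel borel uminus)"
      by (subst nn_integral_distr) auto
    also have "\<dots> = ennreal (1 / v)" using I1 by (simp add: lborel_distr_uminus)
    finally show ?thesis .
  qed
  have "(\<integral>\<^sup>+ t. ennreal (exp (- v * \<bar>t\<bar>)) \<partial>lborel)
      \<le> (\<integral>\<^sup>+ t. ennreal (indicator {0..} t * exp (- v * t)) + ennreal (indicator {0..} (- t) * exp (- v * (- t))) \<partial>lborel)"
    by (intro nn_integral_mono) (auto simp: indicator_def)
  also have "\<dots> = ennreal (1 / v) + ennreal (1 / v)"
    using I1 I2 by (subst nn_integral_add) auto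
  also have "\<dots> = ennreal (2 / v)" using v by (simp flip: ennreal_plus)
  finally show ?thesis .
qed

lemma exp_prod_integral:
  fixes v :: real assumes v: "v > 0"
  shows "(\<integral>\<^sup>+ \<beta>. ennreal (\<Prod>b\<in>Basis. exp (- v * \<bar>\<beta> \<bullet> b\<bar>)) \<partial>(lborel :: 'a::euclidean_space measure))
     \<le> ennreal ((2 / v) ^ DIM('a))"
proof -
  have "(\<integral>\<^sup>+ \<beta>. ennreal (\<Prod>b\<in>Basis. exp (- v * \<bar>\<beta> \<bullet> b\<bar>)) \<partial>(lborel :: 'a measure))
      = (\<integral>\<^sup>+ \<beta>. (\<Prod>b\<in>(Basis::'a set). (\<lambda>b x. ennreal (exp (- v * \<bar>x\<bar>))) b (\<beta> \<bullet> b)) \<partial>lborel)"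
    by (simp add: prod_ennreal)
  also have "\<dots> = (\<Prod>b\<in>(Basis::'a set). \<integral>\<^sup>+ x. ennreal (exp (- v * \<bar>x\<bar>)) \<partial>lborel)"
    by (rule nn_integral_lborel_prod) auto
  also have "\<dots> \<le> (\<Prod>b\<in>(Basis::'a set). ennreal (2 / v))"
    unfolding prod_constant by (intro power_mono exp_abs_integral v) auto
  also have "\<dots> = ennreal ((2 / v) ^ DIM('a))" using v by (simp add: prod_ennreal ennreal_power)
  finally show ?thesis .
qed

lemma sigma_integral:
  fixes \<mu> B :: real assumes \<mu>: "\<mu> > 1" and B: "B > 0"
  shows "(\<integral>\<^sup>+ s. ennreal (indicator {0<..} s * (s powr (- \<mu>) * exp (- B / s))) \<partial>lborel)
     \<le> ennreal ((exp (\<mu> * (ln \<mu> - 1)) + 1 / (\<mu> - 1)) * B powr (1 - \<mu>))"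
proof -
  define E where "E = exp (\<mu> * (ln \<mu> - 1))"
  have E: "E > 0" unfolding E_def by simp
  have pw: "indicator {0<..} s * (s powr (- \<mu>) * exp (- B / s))
      \<le> indicator {0..B} s * (E * B powr (- \<mu>)) + indicator {B..} s * s powr (- \<mu>)" for s
  proof (cases "s > 0")
    case s: True
    show ?thesis
    proof (cases "s \<le> B")
      case True
      have "(B / s) powr \<mu> \<le> E * exp (B / s)"
        unfolding E_def using powr_le_exp[of \<mu> 1 "B / s"] \<mu> B s by simp
      hence "(B / s) powr \<mu> * exp (- B / s) \<le> E"
        by (simp add: exp_minus field_simps)
      moreover have "(B / s) powr \<mu> = B powr \<mu> * s powr (- \<mu>)"
        by (subst powr_divide) (use B s in \<open>auto simp: powr_minus divide_inverse\<close>)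
      ultimately have "B powr \<mu> * (s powr (- \<mu>) * exp (- B / s)) \<le> E" by (simp add: mult.assoc)
      hence "s powr (- \<mu>) * exp (- B / s) \<le> E * B powr (- \<mu>)"
        using B by (simp add: powr_minus field_simps)
      moreover have "0 \<le> indicator {B..} s * s powr (- \<mu>)" by simp
      moreover have "indicator {0..B} s = (1::real)" "indicator {0<..} s = (1::real)" using s True by auto
      ultimately show ?thesis by (simp add: add_increasing2)
    next
      case False
      have "s powr (- \<mu>) * exp (- B / s) \<le> s powr (- \<mu>) * 1"
        by (intro mult_left_mono) (use B s in auto)
      thus ?thesis using s False E B by (simp add: indicator_def)
    qed
  next
    case False thus ?thesis using E B by (simp add: indicator_def)
  qed
  have h1: "((\<lambda>s. E * B powr (- \<mu>)) has_integral (B * (E * B powr (- \<mu>)))) {0..B}"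
    using has_integral_const_real[of "E * B powr (- \<mu>)" 0 B] B by simp
  have I1: "(\<integral>\<^sup>+ s. ennreal (indicator {0..B} s * (E * B powr (- \<mu>))) \<partial>lborel) = ennreal (B * (E * B powr (- \<mu>)))"
    using nn_integral_has_integral_lebesgue[OF _ h1] B E by simp
  have h2: "((\<lambda>s. s powr (- \<mu>)) has_integral - (B powr (- \<mu> + 1)) / (- \<mu> + 1)) {B..}"
    by (rule has_integral_powr_to_inf) (use \<mu> B in auto)
  have I2: "(\<integral>\<^sup>+ s. ennreal (indicator {B..} s * s powr (- \<mu>)) \<partial>lborel) = ennreal (- (B powr (- \<mu> + 1)) / (- \<mu> + 1))"
    using nn_integral_has_integral_lebesgue[OF _ h2] by simp
  have "(\<integral>\<^sup>+ s. ennreal (indicator {0<..} s * (s powr (- \<mu>) * exp (- B / s))) \<partial>lborel)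
     \<le> (\<integral>\<^sup>+ s. ennreal (indicator {0..B} s * (E * B powr (- \<mu>))) + ennreal (indicator {B..} s * s powr (- \<mu>)) \<partial>lborel)"
  proof (intro nn_integral_mono)
    fix s
    have "0 \<le> indicator {0..B} s * (E * B powr (- \<mu>))" "0 \<le> indicator {B..} s * s powr (- \<mu>)"
      using E by auto
    thus "ennreal (indicator {0<..} s * (s powr (- \<mu>) * exp (- B / s)))
       \<le> ennreal (indicator {0..B} s * (E * B powr (- \<mu>))) + ennreal (indicator {B..} s * s powr (- \<mu>))"
      using ennreal_leI[OF pw[of s]] ennreal_plus by metis
  qed
  also have "\<dots> = ennreal (B * (E * B powr (- \<mu>))) + ennreal (- (B powr (- \<mu> + 1)) / (- \<mu> + 1))"
    using I1 I2 by (subst nn_integral_add) auto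
  also have "\<dots> = ennreal (B * (E * B powr (- \<mu>)) + (- (B powr (- \<mu> + 1)) / (- \<mu> + 1)))"
  proof -
    have "B powr (1 - \<mu>) / (1 - \<mu>) \<le> 0" using B \<mu> by (intro divide_nonneg_neg) auto
    hence "0 \<le> - (B powr (- \<mu> + 1)) / (- \<mu> + 1)" by (simp add: add.commute)
    moreover have "0 \<le> B * (E * B powr (- \<mu>))" using B E by simp
    ultimately show ?thesis by (simp only: ennreal_plus)
  qed
  also have "B * (E * B powr (- \<mu>)) + (- (B powr (- \<mu> + 1)) / (- \<mu> + 1))
      = (E + 1 / (\<mu> - 1)) * B powr (1 - \<mu>)"
  proof -
    have "B * B powr (- \<mu>) = B powr (1 - \<mu>)" using B by (simp add: powr_diff powr_minus divide_inverse)
    moreover have "- (B powr (- \<mu> + 1)) / (- \<mu> + 1) = B powr (1 - \<mu>) / (\<mu> - 1)"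
      using \<mu> by (simp add: field_simps)
    ultimately show ?thesis by (simp add: algebra_simps)
  qed
  finally show ?thesis unfolding E_def .
qed

lemma pointwise_bound:
  fixes X :: "real^'p::finite^'n::finite" and y :: "real^'n" and \<beta> :: "real^'p"
  assumes fb: "\<And>x. \<bar>f x\<bar> \<le> C * exp (- c * \<bar>x\<bar>)" and C: "C > 0" and c: "c > 0"
    and \<kappa>: "\<kappa> > 0" and lin: "\<And>\<beta>. \<kappa> * (1 + norm \<beta>) \<le> norm (y - X *v \<beta>)"
    and \<sigma>: "\<sigma> > 0" and ab: "a \<gamma> > 0" "b \<gamma> > 0" and \<pi>: "\<pi> \<gamma> \<ge> 0"
  defines "v \<equiv> (c * \<kappa> / real CARD('p)) / (\<sigma> * max (a \<gamma>) (b \<gamma>))"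
  shows "tp_likelihood f a b X y \<beta> \<sigma> \<gamma> * \<pi> \<gamma> / \<sigma> powr q
     \<le> (2 * C) ^ CARD('n) / (a \<gamma> + b \<gamma>) ^ CARD('n) * \<pi> \<gamma> * \<sigma> powr (- (real CARD('n) + q))
        * exp (- v) * (\<Prod>i\<in>Basis. exp (- v * \<bar>\<beta> \<bullet> i\<bar>))"
proof -
  define s where "s = a \<gamma> + b \<gamma>"
  define M where "M = max (a \<gamma>) (b \<gamma>)"
  define r where "r = y - X *v \<beta>"
  define P where "P = real CARD('p)"
  have s: "s > 0" and M: "M > 0" using ab by (auto simp: s_def M_def)
  have P: "P \<ge> 1" unfolding P_def by simp
  have dens: "\<bar>tp_density f a b 0 \<sigma> \<gamma> z\<bar> \<le> 2 * C / (\<sigma> * s) * exp (- (c / (\<sigma> * M)) * \<bar>z\<bar>)" for z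
  proof -
    have key: "\<bar>f (z / (\<sigma> * t))\<bar> \<le> C * exp (- (c / (\<sigma> * M)) * \<bar>z\<bar>)" if t: "t > 0" "t \<le> M" for t
    proof -
      have "\<bar>z\<bar> / (\<sigma> * M) \<le> \<bar>z\<bar> / (\<sigma> * t)"
        using t \<sigma> by (intro divide_left_mono mult_left_mono) auto
      hence "c * (\<bar>z\<bar> / (\<sigma> * M)) \<le> c * (\<bar>z\<bar> / (\<sigma> * t))" using c by (intro mult_left_mono) auto
      hence "exp (- c * \<bar>z / (\<sigma> * t)\<bar>) \<le> exp (- (c / (\<sigma> * M)) * \<bar>z\<bar>)"
        using t \<sigma> by (simp add: abs_divide abs_mult)
      thus ?thesis using fb[of "z / (\<sigma> * t)"] C by (meson mult_left_mono less_imp_le order.trans)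
    qed
    have "\<bar>tp_density f a b 0 \<sigma> \<gamma> z\<bar> = 2 / (\<sigma> * s) *
        \<bar>if z < 0 then f (z / (\<sigma> * b \<gamma>)) else f (z / (\<sigma> * a \<gamma>))\<bar>"
      unfolding tp_density_def s_def using \<sigma> ab by (simp add: abs_mult)
    also have "\<dots> \<le> 2 / (\<sigma> * s) * (C * exp (- (c / (\<sigma> * M)) * \<bar>z\<bar>))"
      using key[of "b \<gamma>"] key[of "a \<gamma>"] ab \<sigma> s unfolding M_def
      by (intro mult_left_mono) auto
    finally show ?thesis by simp
  qed
  have L: "\<bar>tp_likelihood f a b X y \<beta> \<sigma> \<gamma>\<bar> \<le> (\<Prod>j\<in>UNIV. 2 * C / (\<sigma> * s) * exp (- (c / (\<sigma> * M)) * \<bar>r $ j\<bar>))"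
    unfolding tp_likelihood_def abs_prod
  proof (intro prod_mono conjI)
    fix j
    have "r $ j = y $ j - (X *v \<beta>) $ j" unfolding r_def by simp
    thus "\<bar>tp_density f a b 0 \<sigma> \<gamma> (y $ j - (X *v \<beta>) $ j)\<bar> \<le> 2 * C / (\<sigma> * s) * exp (- (c / (\<sigma> * M)) * \<bar>r $ j\<bar>)"
      using dens[of "r $ j"] by simp
  qed auto
  also have "\<dots> = (2 * C / (\<sigma> * s)) ^ CARD('n) * exp (- (c / (\<sigma> * M)) * (\<Sum>j\<in>UNIV. \<bar>r $ j\<bar>))"
  proof -
    have "(\<Prod>j\<in>UNIV. 2 * C / (\<sigma> * s) * exp (- (c / (\<sigma> * M)) * \<bar>r $ j\<bar>))
        = (2 * C / (\<sigma> * s)) ^ CARD('n) * (\<Prod>j\<in>UNIV. exp (- (c / (\<sigma> * M)) * \<bar>r $ j\<bar>))"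
      by (simp only: prod.distrib prod_constant)
    moreover have "(\<Prod>j\<in>UNIV. exp (- (c / (\<sigma> * M)) * \<bar>r $ j\<bar>)) = exp (\<Sum>j\<in>UNIV. - (c / (\<sigma> * M)) * \<bar>r $ j\<bar>)"
      by (subst exp_sum) auto
    moreover have "(\<Sum>j\<in>UNIV. - (c / (\<sigma> * M)) * \<bar>r $ j\<bar>) = - (c / (\<sigma> * M)) * (\<Sum>j\<in>UNIV. \<bar>r $ j\<bar>)"
      by (simp only: sum_distrib_left)
    ultimately show ?thesis by simp
  qed
  also have "\<dots> \<le> (2 * C / (\<sigma> * s)) ^ CARD('n) * (exp (- v) * (\<Prod>i\<in>Basis. exp (- v * \<bar>\<beta> \<bullet> i\<bar>)))"
  proof -
    have S: "(\<Sum>i\<in>Basis. \<bar>\<beta> \<bullet> i\<bar>) \<le> P * norm \<beta>"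
    proof -
      have "(\<Sum>i\<in>(Basis::(real^'p) set). \<bar>\<beta> \<bullet> i\<bar>) \<le> (\<Sum>i\<in>(Basis::(real^'p) set). norm \<beta>)"
        by (intro sum_mono Basis_le_norm)
      thus ?thesis by (simp add: P_def)
    qed
    have "(\<kappa> / P) * (1 + (\<Sum>i\<in>Basis. \<bar>\<beta> \<bullet> i\<bar>)) \<le> \<kappa> * (1 + norm \<beta>)"
    proof -
      have "(\<kappa> / P) * (\<Sum>i\<in>Basis. \<bar>\<beta> \<bullet> i\<bar>) \<le> (\<kappa> / P) * (P * norm \<beta>)"
        using S \<kappa> P by (intro mult_left_mono) auto
      moreover have "\<kappa> / P \<le> \<kappa>" using \<kappa> P by (simp add: divide_le_eq)
      ultimately show ?thesis using P by (simp add: distrib_left)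
    qed
    also have "\<dots> \<le> norm r" using lin[of \<beta>] unfolding r_def .
    also have "\<dots> \<le> (\<Sum>j\<in>UNIV. \<bar>r $ j\<bar>)" by (rule norm_le_l1_cart)
    finally have ineq: "(\<kappa> / P) * (1 + (\<Sum>i\<in>Basis. \<bar>\<beta> \<bullet> i\<bar>)) \<le> (\<Sum>j\<in>UNIV. \<bar>r $ j\<bar>)" .
    have v_eq: "v = (c / (\<sigma> * M)) * (\<kappa> / P)" unfolding v_def P_def M_def by simp
    have "exp (- (c / (\<sigma> * M)) * (\<Sum>j\<in>UNIV. \<bar>r $ j\<bar>)) \<le> exp (- v * (1 + (\<Sum>i\<in>Basis. \<bar>\<beta> \<bullet> i\<bar>)))"
    proof -
      have "(c / (\<sigma> * M)) * ((\<kappa> / P) * (1 + (\<Sum>i\<in>Basis. \<bar>\<beta> \<bullet> i\<bar>))) \<le> (c / (\<sigma> * M)) * (\<Sum>j\<in>UNIV. \<bar>r $ j\<bar>)"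
        using ineq c \<sigma> M by (intro mult_left_mono) auto
      thus ?thesis unfolding v_eq by (simp add: mult.assoc)
    qed
    also have "\<dots> = exp (- v) * (\<Prod>i\<in>Basis. exp (- v * \<bar>\<beta> \<bullet> i\<bar>))"
    proof -
      have "- v * (1 + (\<Sum>i\<in>Basis. \<bar>\<beta> \<bullet> i\<bar>)) = - v + (\<Sum>i\<in>Basis. - v * \<bar>\<beta> \<bullet> i\<bar>)"
        by (simp add: distrib_left sum_distrib_left)
      hence "exp (- v * (1 + (\<Sum>i\<in>Basis. \<bar>\<beta> \<bullet> i\<bar>))) = exp (- v) * exp (\<Sum>i\<in>(Basis::(real^'p) set). - v * \<bar>\<beta> \<bullet> i\<bar>)"
        by (simp only: exp_add)
      also have "exp (\<Sum>i\<in>(Basis::(real^'p) set). - v * \<bar>\<beta> \<bullet> i\<bar>) = (\<Prod>i\<in>Basis. exp (- v * \<bar>\<beta> \<bullet> i\<bar>))"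
        by (subst exp_sum) auto
      finally show ?thesis .
    qed
    finally show ?thesis using C \<sigma> s by (intro mult_left_mono) auto
  qed
  finally have L2: "\<bar>tp_likelihood f a b X y \<beta> \<sigma> \<gamma>\<bar> \<le> (2 * C / (\<sigma> * s)) ^ CARD('n) * (exp (- v) * (\<Prod>i\<in>Basis. exp (- v * \<bar>\<beta> \<bullet> i\<bar>)))" .
  have "tp_likelihood f a b X y \<beta> \<sigma> \<gamma> * \<pi> \<gamma> / \<sigma> powr q \<le> \<bar>tp_likelihood f a b X y \<beta> \<sigma> \<gamma>\<bar> * \<pi> \<gamma> / \<sigma> powr q"
    using \<pi> \<sigma> by (intro divide_right_mono mult_right_mono) auto
  also have "\<dots> \<le> (2 * C / (\<sigma> * s)) ^ CARD('n) * (exp (- v) * (\<Prod>i\<in>Basis. exp (- v * \<bar>\<beta> \<bullet> i\<bar>))) * \<pi> \<gamma> / \<sigma> powr q"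
    using \<pi> \<sigma> L2 by (intro divide_right_mono mult_right_mono) auto
  also have "\<dots> = (2 * C) ^ CARD('n) / s ^ CARD('n) * \<pi> \<gamma> * (1 / (\<sigma> ^ CARD('n) * \<sigma> powr q))
        * exp (- v) * (\<Prod>i\<in>Basis. exp (- v * \<bar>\<beta> \<bullet> i\<bar>))"
    by (simp add: power_divide power_mult_distrib field_simps)
  also have "1 / (\<sigma> ^ CARD('n) * \<sigma> powr q) = \<sigma> powr (- (real CARD('n) + q))"
  proof -
    have "\<sigma> powr (- (real CARD('n) + q)) = inverse (\<sigma> powr (real CARD('n) + q))" by (rule powr_minus)
    also have "\<sigma> powr (real CARD('n) + q) = \<sigma> powr (real CARD('n)) * \<sigma> powr q" by (rule powr_add)
    also have "\<sigma> powr (real CARD('n)) = \<sigma> ^ CARD('n)" using \<sigma> by (rule powr_realpow)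
    finally show ?thesis by (simp add: divide_inverse)
  qed
  finally show ?thesis unfolding s_def .
qed

theorem corollary3p3:
  fixes f :: "real \<Rightarrow> real"
    and a b \<pi> :: "real \<Rightarrow> real"
    and \<Gamma> :: "real set"
    and q :: real
    and X :: "real^'p::finite^'n::finite"
    and y :: "real^'n"
  assumes f: "admissible_base_density f"
    and \<Gamma>_meas: "\<Gamma> \<in> sets borel"
    and a_meas: "a \<in> borel_measurable borel" and b_meas: "b \<in> borel_measurable borel"
    and ab_pos: "\<And>\<gamma>. \<gamma> \<in> \<Gamma> \<Longrightarrow> a \<gamma> > 0 \<and> b \<gamma> > 0"
    and \<pi>_meas: "\<pi> \<in> borel_measurable borel"
    and \<pi>_nonneg: "\<And>\<gamma>. \<gamma> \<in> \<Gamma> \<Longrightarrow> \<pi> \<gamma> \<ge> 0"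
    and \<pi>_proper: "(\<integral>\<^sup>+ \<gamma>. indicator \<Gamma> \<gamma> * ennreal (\<pi> \<gamma>) \<partial>lborel) = 1"
    and q: "q \<ge> 0"
    and full_rank: "rank X = CARD('p)"
    and y_notin: "y \<notin> range (\<lambda>\<beta>. X *v \<beta>)"
    and n_gt: "real CARD('n) > real CARD('p) + 1 - q"
    and int_fin: "(\<integral>\<^sup>+ \<gamma>. indicator \<Gamma> \<gamma> *
         ennreal (max (a \<gamma>) (b \<gamma>) powr (real CARD('n) + q - 1) / (a \<gamma> + b \<gamma>) ^ CARD('n) * \<pi> \<gamma>)
         \<partial>lborel) < \<infinity>"
  shows "posterior_proper f a b \<Gamma> \<pi> q X y"
proof -
  note [measurable] = \<Gamma>_meas a_meas b_meas \<pi>_meas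
  obtain C c where C: "C > 0" and c: "c > 0" and fb: "\<And>x. \<bar>f x\<bar> \<le> C * exp (- c * \<bar>x\<bar>)"
    using admissible_bound[OF f] by blast
  obtain \<kappa> where \<kappa>: "\<kappa> > 0" and lin: "\<And>\<beta>. \<kappa> * (1 + norm \<beta>) \<le> norm (y - X *v \<beta>)"
    using lin_bound[OF full_rank y_notin] by blast
  define N where "N = CARD('n)"
  define P where "P = CARD('p)"
  define w where "w = c * \<kappa> / real P"
  define mu where "mu = real N + q - real P"
  define Dmu where "Dmu = exp (mu * (ln mu - 1)) + 1 / (mu - 1)"
  define M where "M = (\<lambda>\<gamma>. max (a \<gamma>) (b \<gamma>))"
  define vv where "vv = (\<lambda>\<sigma> \<gamma>. w / (\<sigma> * M \<gamma>))"
  define K where "K = (\<lambda>\<sigma> \<gamma>. (2 * C) ^ N / (a \<gamma> + b \<gamma>) ^ N * \<pi> \<gamma> * \<sigma> powr (- (real N + q)) * exp (- vv \<sigma> \<gamma>))"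
  define K3 where "K3 = (2 * C) ^ N * (2 / w) ^ P * Dmu * w powr (1 - mu)"
  have P: "P \<ge> 1" unfolding P_def by simp
  have w: "w > 0" unfolding w_def using c \<kappa> P by simp
  have mu: "mu > 1" unfolding mu_def N_def P_def using n_gt by simp
  have Dmu: "Dmu > 0" unfolding Dmu_def using mu by (simp add: add_pos_pos)
  have K3: "K3 \<ge> 0" unfolding K3_def using C w Dmu by simp
  have [measurable]: "M \<in> borel_measurable borel" unfolding M_def by measurable
  define G where "G = (\<lambda>(\<beta>::real^'p, \<sigma>::real, \<gamma>::real). indicator (UNIV \<times> {0<..} \<times> \<Gamma>) (\<beta>, \<sigma>, \<gamma>) *
      ennreal (K \<sigma> \<gamma> * (\<Prod>i\<in>Basis. exp (- vv \<sigma> \<gamma> * \<bar>\<beta> \<bullet> i\<bar>))))"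
  define G2 where "G2 = (\<lambda>(\<sigma>::real, \<gamma>::real). indicator ({0<..} \<times> \<Gamma>) (\<sigma>, \<gamma>) *
      ennreal (K \<sigma> \<gamma> * (2 / vv \<sigma> \<gamma>) ^ P))"
  have Gm: "G \<in> borel_measurable (lborel \<Otimes>\<^sub>M lborel \<Otimes>\<^sub>M lborel)"
    unfolding G_def K_def vv_def by measurable
  have G2m: "G2 \<in> borel_measurable (lborel \<Otimes>\<^sub>M lborel)"
    unfolding G2_def K_def vv_def by measurable
  have sf: "sigma_finite_measure (lborel \<Otimes>\<^sub>M lborel :: (real \<times> real) measure)"
    by (intro sigma_finite_pair_measure lborel.sigma_finite_measure_axioms)
  have ps1: "pair_sigma_finite (lborel :: (real^'p) measure) (lborel \<Otimes>\<^sub>M lborel :: (real \<times> real) measure)"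
    unfolding pair_sigma_finite_def using sf lborel.sigma_finite_measure_axioms by blast
  have ps2: "pair_sigma_finite (lborel :: real measure) (lborel :: real measure)"
    unfolding pair_sigma_finite_def using lborel.sigma_finite_measure_axioms by blast
  have step1: "(\<integral>\<^sup>+ (\<beta>, \<sigma>, \<gamma>). indicator (UNIV \<times> {0<..} \<times> \<Gamma>) (\<beta>, \<sigma>, \<gamma>) *
          ennreal (tp_likelihood f a b X y \<beta> \<sigma> \<gamma> * \<pi> \<gamma> / \<sigma> powr q)
        \<partial>(lborel \<Otimes>\<^sub>M lborel \<Otimes>\<^sub>M lborel)) \<le> integral\<^sup>N (lborel \<Otimes>\<^sub>M lborel \<Otimes>\<^sub>M lborel) G"
  proof (intro nn_integral_mono)
    fix x :: "(real^'p) \<times> real \<times> real"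
    obtain \<beta> \<sigma> \<gamma> where x: "x = (\<beta>, \<sigma>, \<gamma>)" by (cases x) auto
    show "(case x of (\<beta>, \<sigma>, \<gamma>) \<Rightarrow> indicator (UNIV \<times> {0<..} \<times> \<Gamma>) (\<beta>, \<sigma>, \<gamma>) *
          ennreal (tp_likelihood f a b X y \<beta> \<sigma> \<gamma> * \<pi> \<gamma> / \<sigma> powr q)) \<le> G x"
    proof (cases "\<sigma> > 0 \<and> \<gamma> \<in> \<Gamma>")
      case True
      have "tp_likelihood f a b X y \<beta> \<sigma> \<gamma> * \<pi> \<gamma> / \<sigma> powr q \<le> K \<sigma> \<gamma> * (\<Prod>i\<in>Basis. exp (- vv \<sigma> \<gamma> * \<bar>\<beta> \<bullet> i\<bar>))"
        using pointwise_bound[OF fb C c \<kappa> lin, of \<sigma> a \<gamma> b \<pi> \<beta> q] True ab_pos[of \<gamma>] \<pi>_nonneg[of \<gamma>]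
        unfolding K_def vv_def w_def M_def N_def P_def by (simp add: mult.assoc)
      thus ?thesis using True unfolding x G_def by (auto intro!: ennreal_leI)
    next
      case False thus ?thesis unfolding x G_def by auto
    qed
  qed
  have step2: "integral\<^sup>N (lborel \<Otimes>\<^sub>M lborel \<Otimes>\<^sub>M lborel) G \<le> integral\<^sup>N (lborel \<Otimes>\<^sub>M lborel) G2"
  proof -
    have "integral\<^sup>N (lborel \<Otimes>\<^sub>M lborel \<Otimes>\<^sub>M lborel) G = (\<integral>\<^sup>+ z. (\<integral>\<^sup>+ \<beta>. G (\<beta>, z) \<partial>lborel) \<partial>(lborel \<Otimes>\<^sub>M lborel))"
      using pair_sigma_finite.nn_integral_snd[OF ps1 Gm] by simp
    also have "\<dots> \<le> integral\<^sup>N (lborel \<Otimes>\<^sub>M lborel) G2"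
    proof (intro nn_integral_mono)
      fix z :: "real \<times> real"
      obtain \<sigma> \<gamma> where z: "z = (\<sigma>, \<gamma>)" by (cases z) auto
      show "(\<integral>\<^sup>+ \<beta>. G (\<beta>, z) \<partial>lborel) \<le> G2 z"
      proof (cases "\<sigma> > 0 \<and> \<gamma> \<in> \<Gamma>")
        case True
        have abg: "a \<gamma> > 0" "b \<gamma> > 0" using ab_pos True by auto
        have Mg: "M \<gamma> > 0" unfolding M_def using abg by auto
        have vpos: "vv \<sigma> \<gamma> > 0" unfolding vv_def using w Mg True by simp
        have Kpos: "K \<sigma> \<gamma> \<ge> 0" unfolding K_def using C abg \<pi>_nonneg[of \<gamma>] True by simp
        have "(\<integral>\<^sup>+ \<beta>. G (\<beta>, z) \<partial>lborel) = (\<integral>\<^sup>+ \<beta>. ennreal (K \<sigma> \<gamma>) * ennreal (\<Prod>i\<in>Basis. exp (- vv \<sigma> \<gamma> * \<bar>(\<beta>::real^'p) \<bullet> i\<bar>)) \<partial>lborel)"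
          unfolding G_def z using True by (simp add: ennreal_mult'[OF Kpos])
        also have "\<dots> = ennreal (K \<sigma> \<gamma>) * (\<integral>\<^sup>+ \<beta>. ennreal (\<Prod>i\<in>Basis. exp (- vv \<sigma> \<gamma> * \<bar>(\<beta>::real^'p) \<bullet> i\<bar>)) \<partial>lborel)"
          by (rule nn_integral_cmult) measurable
        also have "\<dots> \<le> ennreal (K \<sigma> \<gamma>) * ennreal ((2 / vv \<sigma> \<gamma>) ^ DIM(real^'p))"
          by (intro mult_left_mono exp_prod_integral vpos) auto
        also have "\<dots> = G2 z" unfolding G2_def z P_def using True Kpos vpos by (simp add: ennreal_mult)
        finally show ?thesis .
      next
        case False thus ?thesis unfolding G_def G2_def z by auto
      qed
    qed
    finally show ?thesis .
  qed
  have step3: "integral\<^sup>N (lborel \<Otimes>\<^sub>M lborel) G2 \<le> (\<integral>\<^sup>+ \<gamma>. indicator \<Gamma> \<gamma> * ennreal (K3 * (M \<gamma> powr (real N + q - 1) / (a \<gamma> + b \<gamma>) ^ N * \<pi> \<gamma>)) \<partial>lborel)"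
  proof -
    have "integral\<^sup>N (lborel \<Otimes>\<^sub>M lborel) G2 = (\<integral>\<^sup>+ \<gamma>. (\<integral>\<^sup>+ \<sigma>. G2 (\<sigma>, \<gamma>) \<partial>lborel) \<partial>lborel)"
      using pair_sigma_finite.nn_integral_snd[OF ps2 G2m] by simp
    also have "\<dots> \<le> (\<integral>\<^sup>+ \<gamma>. indicator \<Gamma> \<gamma> * ennreal (K3 * (M \<gamma> powr (real N + q - 1) / (a \<gamma> + b \<gamma>) ^ N * \<pi> \<gamma>)) \<partial>lborel)"
    proof (intro nn_integral_mono)
      fix \<gamma> :: real
      show "(\<integral>\<^sup>+ \<sigma>. G2 (\<sigma>, \<gamma>) \<partial>lborel) \<le> indicator \<Gamma> \<gamma> * ennreal (K3 * (M \<gamma> powr (real N + q - 1) / (a \<gamma> + b \<gamma>) ^ N * \<pi> \<gamma>))"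
      proof (cases "\<gamma> \<in> \<Gamma>")
        case True
        have abg: "a \<gamma> > 0" "b \<gamma> > 0" using ab_pos True by auto
        have Mg: "M \<gamma> > 0" unfolding M_def using abg by auto
        define Q where "Q = (2 * C) ^ N / (a \<gamma> + b \<gamma>) ^ N * \<pi> \<gamma> * (2 * M \<gamma> / w) ^ P"
        define B where "B = w / M \<gamma>"
        have Q: "Q \<ge> 0" unfolding Q_def using C abg Mg w \<pi>_nonneg[of \<gamma>] True by simp
        have B: "B > 0" unfolding B_def using w Mg by simp
        have eq: "K \<sigma> \<gamma> * (2 / vv \<sigma> \<gamma>) ^ P = Q * (\<sigma> powr (- mu) * exp (- B / \<sigma>))" if \<sigma>: "\<sigma> > 0" for \<sigma>
        proof -
          have e1: "2 / vv \<sigma> \<gamma> = (2 * M \<gamma> / w) * \<sigma>" unfolding vv_def using \<sigma> w Mg by (simp add: field_simps)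
          have "(2 / vv \<sigma> \<gamma>) ^ P = (2 * M \<gamma> / w) ^ P * \<sigma> ^ P"
            by (simp only: e1 power_mult_distrib)
          moreover have "\<sigma> powr (- (real N + q)) * \<sigma> ^ P = \<sigma> powr (- mu)"
          proof -
            have "\<sigma> powr (- (real N + q)) * \<sigma> ^ P = \<sigma> powr (- (real N + q) + real P)"
              using \<sigma> by (simp add: powr_realpow[symmetric] powr_add[symmetric])
            also have "- (real N + q) + real P = - mu" unfolding mu_def by simp
            finally show ?thesis .
          qed
          moreover have "vv \<sigma> \<gamma> = B / \<sigma>" unfolding vv_def B_def by simp
          ultimately show ?thesis unfolding K_def Q_def by (simp add: algebra_simps)
        qed
        have "(\<integral>\<^sup>+ \<sigma>. G2 (\<sigma>, \<gamma>) \<partial>lborel) = (\<integral>\<^sup>+ \<sigma>. ennreal Q * ennreal (indicator {0<..} \<sigma> * (\<sigma> powr (- mu) * exp (- B / \<sigma>))) \<partial>lborel)"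
        proof (intro nn_integral_cong)
          fix \<sigma> :: real
          show "G2 (\<sigma>, \<gamma>) = ennreal Q * ennreal (indicator {0<..} \<sigma> * (\<sigma> powr (- mu) * exp (- B / \<sigma>)))"
            unfolding G2_def using True eq[of \<sigma>] Q by (auto simp: indicator_def ennreal_mult[symmetric])
        qed
        also have "\<dots> = ennreal Q * (\<integral>\<^sup>+ \<sigma>. ennreal (indicator {0<..} \<sigma> * (\<sigma> powr (- mu) * exp (- B / \<sigma>))) \<partial>lborel)"
          by (rule nn_integral_cmult) measurable
        also have "\<dots> \<le> ennreal Q * ennreal (Dmu * B powr (1 - mu))"
          unfolding Dmu_def by (intro mult_left_mono sigma_integral mu B) auto
        also have "\<dots> = ennreal (Q * (Dmu * B powr (1 - mu)))" using Q Dmu by (simp add: ennreal_mult)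
        also have "Q * (Dmu * B powr (1 - mu)) = K3 * (M \<gamma> powr (real N + q - 1) / (a \<gamma> + b \<gamma>) ^ N * \<pi> \<gamma>)"
        proof -
          have "B powr (1 - mu) = w powr (1 - mu) * M \<gamma> powr (mu - 1)"
          proof -
            have "B powr (1 - mu) = w powr (1 - mu) / M \<gamma> powr (1 - mu)"
              unfolding B_def using w Mg by (simp add: powr_divide)
            moreover have "M \<gamma> powr (mu - 1) = inverse (M \<gamma> powr (1 - mu))"
              using powr_minus[of "M \<gamma>" "1 - mu"] by simp
            ultimately show ?thesis by (simp add: divide_inverse)
          qed
          moreover have "(2 * M \<gamma> / w) ^ P = (2 / w) ^ P * M \<gamma> ^ P"
          proof -
            have "2 * M \<gamma> / w = (2 / w) * M \<gamma>" by simp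
            thus ?thesis by (simp only: power_mult_distrib)
          qed
          moreover have "M \<gamma> ^ P * M \<gamma> powr (mu - 1) = M \<gamma> powr (real N + q - 1)"
          proof -
            have "M \<gamma> ^ P * M \<gamma> powr (mu - 1) = M \<gamma> powr (real P + (mu - 1))"
              using Mg by (simp add: powr_realpow[symmetric] powr_add[symmetric])
            also have "real P + (mu - 1) = real N + q - 1" unfolding mu_def by simp
            finally show ?thesis .
          qed
          ultimately show ?thesis unfolding Q_def K3_def by (simp add: algebra_simps)
        qed
        finally show ?thesis using True by simp
      next
        case False thus ?thesis unfolding G2_def by auto
      qed
    qed
    finally show ?thesis .
  qed
  have step4: "(\<integral>\<^sup>+ \<gamma>. indicator \<Gamma> \<gamma> * ennreal (K3 * (M \<gamma> powr (real N + q - 1) / (a \<gamma> + b \<gamma>) ^ N * \<pi> \<gamma>)) \<partial>lborel) < \<infinity>"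
  proof -
    have "(\<integral>\<^sup>+ \<gamma>. indicator \<Gamma> \<gamma> * ennreal (K3 * (M \<gamma> powr (real N + q - 1) / (a \<gamma> + b \<gamma>) ^ N * \<pi> \<gamma>)) \<partial>lborel)
       = (\<integral>\<^sup>+ \<gamma>. ennreal K3 * (indicator \<Gamma> \<gamma> * ennreal (M \<gamma> powr (real N + q - 1) / (a \<gamma> + b \<gamma>) ^ N * \<pi> \<gamma>)) \<partial>lborel)"
    proof (intro nn_integral_cong)
      fix \<gamma> :: real
      show "indicator \<Gamma> \<gamma> * ennreal (K3 * (M \<gamma> powr (real N + q - 1) / (a \<gamma> + b \<gamma>) ^ N * \<pi> \<gamma>))
         = ennreal K3 * (indicator \<Gamma> \<gamma> * ennreal (M \<gamma> powr (real N + q - 1) / (a \<gamma> + b \<gamma>) ^ N * \<pi> \<gamma>))"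
        by (subst ennreal_mult'[OF K3]) (simp add: mult.left_commute)
    qed
    also have "\<dots> = ennreal K3 * (\<integral>\<^sup>+ \<gamma>. indicator \<Gamma> \<gamma> * ennreal (M \<gamma> powr (real N + q - 1) / (a \<gamma> + b \<gamma>) ^ N * \<pi> \<gamma>) \<partial>lborel)"
      by (rule nn_integral_cmult) measurable
    also have "\<dots> < \<infinity>" using int_fin unfolding M_def N_def by (simp add: ennreal_mult_less_top)
    finally show ?thesis .
  qed
  show ?thesis unfolding posterior_proper_def
    using step1 step2 step3 step4 by (meson order.trans le_less_trans)
qed

end
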